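(* Let $\langle\cdot\rangle$ satisfy (A1) (the shifts $a\mapsto a(\cdot+z)$, $z\in\mathbb Z^d$, preserve $\langle\cdot\rangle$), and let $G_T$ be the Green's function. Then for all $T>0$, $a\in\Omega$ and $b\in\mathbb B^d$, $$1+\frac{a(b)}{1-a(b)\nabla\nabla G_T(a,b,b)}\le K\,\omega_0^2(a,b),$$ where $K$ depends only on $d$.
   Context: $\mathbb B^d$ is the set of nearest-neighbour bonds of $\mathbb Z^d$; $x_b,y_b$ endpoints of $b$ with $y_b-x_b\in\{e_1,\dots,e_d\}$; $\nabla u(b)=u(y_b)-u(x_b)$, $\nabla^*F(x)=\sum_i(F(\{x-e_i,x\})-F(\{x,x+e_i\}))$. $\Omega=[0,1]^{\mathbb B^d}$. Green's function: $x\mapsto G_T(a,x,y)$ is the unique $\ell^2(\mathbb Z^d)$ solution of $\frac1TG_T(a,\cdot,y)+\nabla^*(a\nabla G_T(a,\cdot,y))=\delta(\cdot-y)$; $\nabla\nabla G_T(a,b,b)=G_T(a,y_b,y_b)-G_T(a,x_b,y_b)-G_T(a,y_b,x_b)+G_T(a,x_b,x_b)$. Chemical distance $\mathrm{dist}_a(x,y)=\inf\{\sum_{b\in\pi}a(b)^{-1}:\pi$ a path from $x$ to $y\}$ with $1/0=\infty$; $\omega(a,b)=\mathrm{dist}_a(x_b,y_b)^{d+2}$; $a^{b,0}$ is $a$ with $a(b)$ replaced by $0$; $\omega_0(a,b)=\omega(a^{b,0},b)\in[1,\infty]$. *)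

theory Defs
  imports "HOL-Analysis.Analysis"
begin

text \<open>Lattice Z^d is int^'n (d = CARD('n)). A bond b = {x, x + e_i} is encoded by the pair
 (x, i), so x_b = x and y_b = x + e_i.\<close>

definition unitv :: "'n::finite \<Rightarrow> int^'n" where
  "unitv i = axis i 1"

definition in_Omega :: "(int^'n::finite \<Rightarrow> 'n \<Rightarrow> real) \<Rightarrow> bool" where
  "in_Omega a \<longleftrightarrow> (\<forall>x i. 0 \<le> a x i \<and> a x i \<le> 1)"

definition grad :: "(int^'n::finite \<Rightarrow> real) \<Rightarrow> int^'n \<Rightarrow> 'n \<Rightarrow> real" where
  "grad u x i = u (x + unitv i) - u x"

definition divg :: "(int^'n::finite \<Rightarrow> 'n \<Rightarrow> real) \<Rightarrow> int^'n \<Rightarrow> real" where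
  "divg F x = (\<Sum>i\<in>UNIV. F (x - unitv i) i - F x i)"

definition ell2 :: "(int^'n::finite \<Rightarrow> real) \<Rightarrow> bool" where
  "ell2 u \<longleftrightarrow> (\<lambda>x. (u x)\<^sup>2) summable_on UNIV"

definition green :: "real \<Rightarrow> (int^'n::finite \<Rightarrow> 'n \<Rightarrow> real) \<Rightarrow> int^'n \<Rightarrow> int^'n \<Rightarrow> real" where
  "green T a x y = (THE u. ell2 u \<and>
      (\<forall>z. u z / T + divg (\<lambda>w i. a w i * grad u w i) z = (if z = y then 1 else 0))) x"

definition gradgrad_green :: "real \<Rightarrow> (int^'n::finite \<Rightarrow> 'n \<Rightarrow> real) \<Rightarrow> int^'n \<Rightarrow> 'n \<Rightarrow> real" where
  "gradgrad_green T a x i = (let y = x + unitv i in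
     green T a y y - green T a x y - green T a y x + green T a x x)"

definition bond_cost :: "(int^'n::finite \<Rightarrow> 'n \<Rightarrow> real) \<Rightarrow> int^'n \<Rightarrow> 'n \<Rightarrow> ereal" where
  "bond_cost a x i = (if a x i = 0 then \<infinity> else ereal (1 / a x i))"

definition nn :: "int^'n::finite \<Rightarrow> int^'n \<Rightarrow> bool" where
  "nn p q \<longleftrightarrow> (\<exists>i. q = p + unitv i \<or> p = q + unitv i)"

definition step_cost :: "(int^'n::finite \<Rightarrow> 'n \<Rightarrow> real) \<Rightarrow> int^'n \<Rightarrow> int^'n \<Rightarrow> ereal" where
  "step_cost a p q = (if \<exists>i. q = p + unitv i then bond_cost a p (SOME i. q = p + unitv i)
                      else bond_cost a q (SOME i. p = q + unitv i))"

definition is_path :: "(int^'n::finite) list \<Rightarrow> bool" where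
  "is_path ps \<longleftrightarrow> ps \<noteq> [] \<and> (\<forall>k. Suc k < length ps \<longrightarrow> nn (ps ! k) (ps ! Suc k))"

definition path_cost :: "(int^'n::finite \<Rightarrow> 'n \<Rightarrow> real) \<Rightarrow> (int^'n) list \<Rightarrow> ereal" where
  "path_cost a ps = (\<Sum>k<length ps - 1. step_cost a (ps ! k) (ps ! Suc k))"

definition chem_dist :: "(int^'n::finite \<Rightarrow> 'n \<Rightarrow> real) \<Rightarrow> int^'n \<Rightarrow> int^'n \<Rightarrow> ereal" where
  "chem_dist a x y = Inf {path_cost a ps | ps. is_path ps \<and> hd ps = x \<and> last ps = y}"

definition omega :: "(int^'n::finite \<Rightarrow> 'n \<Rightarrow> real) \<Rightarrow> int^'n \<Rightarrow> 'n \<Rightarrow> ereal" where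
  "omega a x i = chem_dist a x (x + unitv i) ^ (CARD('n) + 2)"

definition omega0 :: "(int^'n::finite \<Rightarrow> 'n \<Rightarrow> real) \<Rightarrow> int^'n \<Rightarrow> 'n \<Rightarrow> ereal" where
  "omega0 a x i = omega (a(x := (a x)(i := 0))) x i"

end

theory Submission imports Defs begin

lemma has_sum_shift:
  fixes f :: "'a::ab_group_add \<Rightarrow> 'b::topological_comm_monoid_add"
  shows "((\<lambda>z. f (z + c)) has_sum s) UNIV \<longleftrightarrow> (f has_sum s) UNIV"
proof -
  have inj: "inj_on (\<lambda>z::'a. z + c) UNIV" by (simp add: inj_on_def)
  have rng: "(\<lambda>z::'a. z + c) ` UNIV = UNIV"
    by (metis surjI diff_add_cancel)
  show ?thesis using has_sum_reindex[OF inj, of f s] rng by (simp add: comp_def)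
qed

lemma summable_shift:
  fixes f :: "'a::ab_group_add \<Rightarrow> 'b::topological_comm_monoid_add"
  shows "(\<lambda>z. f (z + c)) summable_on UNIV \<longleftrightarrow> f summable_on UNIV"
  using has_sum_shift unfolding summable_on_def by blast

lemma infsum_shift:
  fixes f :: "'a::ab_group_add \<Rightarrow> 'b::{topological_comm_monoid_add,t2_space}"
  shows "infsum (\<lambda>z. f (z + c)) UNIV = infsum f UNIV"
  by (metis has_sum_shift infsumI infsum_not_exists summable_on_def)

lemma has_sum_diff:
  fixes f g :: "'a \<Rightarrow> 'b::topological_ab_group_add"
  assumes "(f has_sum a) A" "(g has_sum b) A"
  shows "((\<lambda>x. f x - g x) has_sum (a - b)) A"
proof -
  have "((\<lambda>x. - g x) has_sum (-b)) A" by (subst has_sum_uminus) (simp add: assms)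
  from has_sum_add[OF assms(1) this] show ?thesis by simp
qed

lemma summable_on_diff:
  fixes f g :: "'a \<Rightarrow> 'b::topological_ab_group_add"
  assumes "f summable_on A" "g summable_on A"
  shows "(\<lambda>x. f x - g x) summable_on A"
  using assms has_sum_diff unfolding summable_on_def by blast

lemma has_sum_finsum:
  fixes f :: "'i \<Rightarrow> 'a \<Rightarrow> 'b::topological_comm_monoid_add"
  assumes "finite I" "\<And>i. i \<in> I \<Longrightarrow> (f i has_sum s i) A"
  shows "((\<lambda>x. \<Sum>i\<in>I. f i x) has_sum (\<Sum>i\<in>I. s i)) A"
  using assms
proof (induction I rule: finite_induct)
  case empty then show ?case by simp
next
  case (insert j I)
  then show ?case by (simp add: has_sum_add)
qed

lemma ell2_add: assumes "ell2 f" "ell2 g" shows "ell2 (\<lambda>z. f z + g z)"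
proof -
  have "(\<lambda>z. 2 * (f z)\<^sup>2 + 2 * (g z)\<^sup>2) summable_on UNIV"
    using assms unfolding ell2_def by (intro summable_on_add summable_on_cmult_right)
  then show ?thesis unfolding ell2_def
  proof (rule summable_on_comparison_test)
    fix z
    have "0 \<le> (f z - g z)\<^sup>2" by simp
    then show "(f z + g z)\<^sup>2 \<le> 2 * (f z)\<^sup>2 + 2 * (g z)\<^sup>2"
      by (simp add: power2_eq_square algebra_simps)
  qed auto
qed


lemma ell2_summable_prod:
  assumes "ell2 f" "ell2 g"
  shows "(\<lambda>z. f z * g z) summable_on UNIV"
proof -
  have "(\<lambda>z. ((f z + g z)\<^sup>2 - (f z)\<^sup>2 - (g z)\<^sup>2) * (1/2)) summable_on UNIV"
    using ell2_add[OF assms] assms unfolding ell2_def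
    by (intro summable_on_cmult_left summable_on_diff) 
  then show ?thesis by (simp add: power2_eq_square algebra_simps)
qed


definition Lop :: "real \<Rightarrow> (int^'n::finite \<Rightarrow> 'n \<Rightarrow> real) \<Rightarrow> (int^'n \<Rightarrow> real) \<Rightarrow> int^'n \<Rightarrow> real" where
  "Lop T a u z = u z / T + divg (\<lambda>w i. a w i * grad u w i) z"

lemma ell2_shift: "ell2 u \<Longrightarrow> ell2 (\<lambda>z. u (z + c))"
  unfolding ell2_def by (subst summable_shift) 

lemma ell2_scale: "ell2 u \<Longrightarrow> ell2 (\<lambda>z. c * u z)"
  unfolding ell2_def by (simp add: power_mult_distrib summable_on_cmult_right)

lemma ell2_diff: assumes "ell2 f" "ell2 g" shows "ell2 (\<lambda>z. f z - g z)"
  using ell2_add[OF assms(1) ell2_scale[OF assms(2), of "-1"]] by simp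

lemma ell2_grad: "ell2 u \<Longrightarrow> ell2 (\<lambda>z. grad u z i)"
  unfolding grad_def by (intro ell2_diff ell2_shift)

lemma ell2_flux:
  assumes a: "in_Omega a" and u: "ell2 u"
  shows "ell2 (\<lambda>z. a z i * grad u z i)"
  unfolding ell2_def
proof (rule summable_on_comparison_test[OF ell2_grad[OF u, unfolded ell2_def]])
  fix z
  have "0 \<le> a z i" "a z i \<le> 1" using a by (auto simp: in_Omega_def)
  then have "(a z i)\<^sup>2 \<le> 1" by (simp add: power_le_one)
  then have "(a z i)\<^sup>2 * (grad u z i)\<^sup>2 \<le> 1 * (grad u z i)\<^sup>2"
    by (intro mult_right_mono) auto
  then show "(a z i * grad u z i)\<^sup>2 \<le> (grad u z i)\<^sup>2" by (simp add: power_mult_distrib)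
qed auto

lemma energy:
  assumes a: "in_Omega a" and u: "ell2 u"
  shows "((\<lambda>z. u z * Lop T a u z) has_sum
     (infsum (\<lambda>z. (u z)\<^sup>2) UNIV / T + (\<Sum>i\<in>UNIV. infsum (\<lambda>z. a z i * (grad u z i)\<^sup>2) UNIV))) UNIV"
proof -
  define F where "F z i = a z i * grad u z i" for z i
  have Bi: "((\<lambda>z. u z * F (z - unitv i) i - u z * F z i) has_sum
              infsum (\<lambda>z. a z i * (grad u z i)\<^sup>2) UNIV) UNIV" for i
  proof -
    have fl: "ell2 (\<lambda>z. F z i)" unfolding F_def by (rule ell2_flux[OF a u])
    have s1: "(\<lambda>z. u (z + unitv i) * F z i) summable_on UNIV"
      by (rule ell2_summable_prod[OF ell2_shift[OF u] fl])
    have s2: "(\<lambda>z. u z * F z i) summable_on UNIV"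
      by (rule ell2_summable_prod[OF u fl])
    have h1: "((\<lambda>z. u z * F (z - unitv i) i) has_sum infsum (\<lambda>z. u (z + unitv i) * F z i) UNIV) UNIV"
      using has_sum_shift[of "\<lambda>z. u (z + unitv i) * F z i" "- unitv i"] s1 by simp
    have h2: "((\<lambda>z. u z * F z i) has_sum infsum (\<lambda>z. u z * F z i) UNIV) UNIV"
      using s2 by simp
    have hd: "((\<lambda>z. u (z + unitv i) * F z i - u z * F z i) has_sum
        (infsum (\<lambda>z. u (z + unitv i) * F z i) UNIV - infsum (\<lambda>z. u z * F z i) UNIV)) UNIV"
      using has_sum_diff[OF has_sum_infsum[OF s1] h2] .
    have eq: "(\<lambda>z. u (z + unitv i) * F z i - u z * F z i) = (\<lambda>z. a z i * (grad u z i)\<^sup>2)"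
      by (auto simp: F_def grad_def power2_eq_square algebra_simps)
    have v: "infsum (\<lambda>z. a z i * (grad u z i)\<^sup>2) UNIV =
        infsum (\<lambda>z. u (z + unitv i) * F z i) UNIV - infsum (\<lambda>z. u z * F z i) UNIV"
      using hd unfolding eq by (rule infsumI)
    show ?thesis unfolding v using has_sum_diff[OF h1 h2] .
  qed
  have S: "((\<lambda>z. \<Sum>i\<in>UNIV. u z * F (z - unitv i) i - u z * F z i) has_sum
     (\<Sum>i\<in>UNIV. infsum (\<lambda>z. a z i * (grad u z i)\<^sup>2) UNIV)) UNIV"
    by (rule has_sum_finsum) (auto intro: Bi)
  have A: "((\<lambda>z. (u z)\<^sup>2 * (1/T)) has_sum (infsum (\<lambda>z. (u z)\<^sup>2) UNIV * (1/T))) UNIV"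
    using u unfolding ell2_def by (intro has_sum_cmult_left) simp
  have "((\<lambda>z. (u z)\<^sup>2 * (1/T) + (\<Sum>i\<in>UNIV. u z * F (z - unitv i) i - u z * F z i)) has_sum
     (infsum (\<lambda>z. (u z)\<^sup>2) UNIV * (1/T) + (\<Sum>i\<in>UNIV. infsum (\<lambda>z. a z i * (grad u z i)\<^sup>2) UNIV))) UNIV"
    by (rule has_sum_add[OF A S])
  moreover have "(\<lambda>z. (u z)\<^sup>2 * (1/T) + (\<Sum>i\<in>UNIV. u z * F (z - unitv i) i - u z * F z i))
      = (\<lambda>z. u z * Lop T a u z)"
    by (auto simp: Lop_def divg_def F_def sum_distrib_left power2_eq_square algebra_simps)
  ultimately show ?thesis by simp
qed


lemma divg_diff: "divg (\<lambda>w i. F w i - G w i) z = divg F z - divg G z"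
  by (simp add: divg_def sum_subtractf[symmetric] algebra_simps)

lemma Lop_diff: "Lop T a (\<lambda>z. u z - v z) z = Lop T a u z - Lop T a v z"
proof -
  have "(\<lambda>w i. a w i * grad (\<lambda>z. u z - v z) w i) = (\<lambda>w i. a w i * grad u w i - a w i * grad v w i)"
    by (auto simp: grad_def algebra_simps)
  then show ?thesis by (simp add: Lop_def divg_diff diff_divide_distrib)
qed

lemma Lop_zero_unique:
  assumes T: "T > 0" and a: "in_Omega a" and u: "ell2 u" and L: "\<And>z. Lop T a u z = 0"
  shows "u z = 0"
proof -
  have h: "((\<lambda>z. u z * Lop T a u z) has_sum 0) UNIV" using L by simp
  have e: "infsum (\<lambda>z. (u z)\<^sup>2) UNIV / T + (\<Sum>i\<in>UNIV. infsum (\<lambda>z. a z i * (grad u z i)\<^sup>2) UNIV) = 0"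
    using has_sum_unique[OF energy[OF a u, of T] h] .
  have B: "0 \<le> (\<Sum>i\<in>UNIV. infsum (\<lambda>z. a z i * (grad u z i)\<^sup>2) UNIV)"
    using a by (intro sum_nonneg infsum_nonneg) (auto simp: in_Omega_def)
  have "infsum (\<lambda>z. (u z)\<^sup>2) UNIV / T \<le> 0" using e B by linarith
  then have "infsum (\<lambda>z. (u z)\<^sup>2) UNIV \<le> 0" using T by (simp add: divide_le_0_iff)
  then have "(u z)\<^sup>2 = 0"
    by (rule nonneg_infsum_le_0D[where x=z]) (use u in \<open>auto simp: ell2_def\<close>)
  then show ?thesis by simp
qed

lemma green_eqI:
  assumes T: "T > 0" and a: "in_Omega a" and g: "ell2 g"
    and L: "\<And>z. Lop T a g z = (if z = p then 1 else 0)"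
  shows "green T a z p = g z"
proof -
  let ?P = "\<lambda>u. ell2 u \<and> (\<forall>z. u z / T + divg (\<lambda>w i. a w i * grad u w i) z = (if z = p then 1 else 0))"
  have "(THE u. ?P u) = g"
  proof (rule the_equality)
    show "?P g" using g L by (simp add: Lop_def)
  next
    fix u assume Pu: "?P u"
    have "(\<lambda>z. u z - g z) z' = 0" for z'
    proof (rule Lop_zero_unique[OF T a])
      show "ell2 (\<lambda>z. u z - g z)" using Pu g by (intro ell2_diff) auto
      fix z show "Lop T a (\<lambda>z. u z - g z) z = 0"
        using Pu L[of z] by (simp add: Lop_diff Lop_def)
    qed
    then show "u = g" by auto
  qed
  then show ?thesis unfolding green_def by simp
qed


lemma Lop_scale: "Lop T a (\<lambda>z. c * u z) z = c * Lop T a u z"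
proof -
  have "(\<lambda>w i. a w i * grad (\<lambda>z. c * u z) w i) = (\<lambda>w i. c * (a w i * grad u w i))"
    by (auto simp: grad_def algebra_simps)
  then show ?thesis by (simp add: Lop_def divg_def sum_distrib_left algebra_simps)
qed

lemma divg_has_sum0:
  assumes "\<And>i. (\<lambda>z. F z i) summable_on UNIV"
  shows "(divg F has_sum 0) UNIV"
proof -
  have "((\<lambda>z. F (z - unitv i) i - F z i) has_sum 0) UNIV" for i
  proof -
    have h1: "((\<lambda>z. F (z - unitv i) i) has_sum infsum (\<lambda>z. F z i) UNIV) UNIV"
      using has_sum_shift[of "\<lambda>z. F z i" "- unitv i"] assms[of i] by simp
    show ?thesis using has_sum_diff[OF h1 has_sum_infsum[OF assms[of i]]] by simp
  qed
  then have "((\<lambda>z. \<Sum>i\<in>UNIV. F (z - unitv i) i - F z i) has_sum (\<Sum>i\<in>UNIV. 0)) UNIV"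
    using has_sum_finsum[where I=UNIV and f="\<lambda>i z. F (z - unitv i) i - F z i" and s="\<lambda>_. 0" and A=UNIV] by simp
  then show ?thesis by (simp add: divg_def[abs_def])
qed

definition kap :: "real \<Rightarrow> 'n::finite itself \<Rightarrow> real" where
  "kap T (_::'n itself) = 1 / T + 2 * real CARD('n)"

definition Mop :: "real \<Rightarrow> (int^'n::finite \<Rightarrow> 'n \<Rightarrow> real) \<Rightarrow> (int^'n \<Rightarrow> real) \<Rightarrow> int^'n \<Rightarrow> real" where
  "Mop T a u z = u z - Lop T a u z / kap T TYPE('n)"

lemma kap_pos: "T > 0 \<Longrightarrow> kap T TYPE('n::finite) > 0"
  by (simp add: kap_def add_pos_nonneg)

lemma Lop_Mop: "T > 0 \<Longrightarrow> Lop T a u z = kap T TYPE('n::finite) * (u z - Mop T a u z)"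
  for u :: "int^'n \<Rightarrow> real"
proof -
  assume T: "T > 0"
  have "kap T TYPE('n) > 0" by (rule kap_pos) (rule T)
  then show ?thesis by (simp add: Mop_def)
qed

lemma Mop_expand:
  fixes u :: "int^'n::finite \<Rightarrow> real"
  assumes T: "T > 0"
  shows "Mop T a u z = (\<Sum>i\<in>UNIV. (2 - a (z - unitv i) i - a z i) * u z
      + a (z - unitv i) i * u (z - unitv i) + a z i * u (z + unitv i)) / kap T TYPE('n)"
proof -
  have k: "kap T TYPE('n) > 0" using kap_pos[OF T] .
  have "kap T TYPE('n) * u z - Lop T a u z = (\<Sum>i\<in>UNIV. (2 - a (z - unitv i) i - a z i) * u z
      + a (z - unitv i) i * u (z - unitv i) + a z i * u (z + unitv i))"
  proof -
    define D where "D i = a (z - unitv i) i * (u z - u (z - unitv i)) - a z i * (u (z + unitv i) - u z)" for i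
    have L: "Lop T a u z = u z / T + (\<Sum>i\<in>UNIV. D i)"
      by (simp add: Lop_def divg_def grad_def D_def)
    have K: "kap T TYPE('n) * u z = u z / T + (\<Sum>i\<in>(UNIV::'n set). 2 * u z)"
      by (simp add: kap_def algebra_simps)
    have "kap T TYPE('n) * u z - Lop T a u z = (\<Sum>i\<in>UNIV. 2 * u z - D i)"
      unfolding L K by (simp add: sum_subtractf)
    also have "\<dots> = (\<Sum>i\<in>UNIV. (2 - a (z - unitv i) i - a z i) * u z
      + a (z - unitv i) i * u (z - unitv i) + a z i * u (z + unitv i))"
      by (rule sum.cong) (auto simp: D_def algebra_simps)
    finally show ?thesis .
  qed
  then show ?thesis using k by (simp add: Mop_def field_simps)
qed

lemma Mop_nonneg:
  assumes T: "T > 0" and a: "in_Omega a" and u: "\<And>z. u z \<ge> 0"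
  shows "Mop T a u z \<ge> 0"
  unfolding Mop_expand[OF T]
proof (intro divide_nonneg_pos sum_nonneg add_nonneg_nonneg mult_nonneg_nonneg)
  fix i
  show "0 \<le> 2 - a (z - unitv i) i - a z i" using a unfolding in_Omega_def
    by (smt (verit))
qed (use a u kap_pos[OF T] in \<open>auto simp: in_Omega_def\<close>)

lemma Lop_has_sum:
  assumes a: "in_Omega a" and u0: "\<And>z. u z \<ge> 0" and u: "u summable_on UNIV"
  shows "(Lop T a u has_sum (infsum u UNIV / T)) UNIV"
proof -
  have fs: "(\<lambda>z. a z i * grad u z i) summable_on UNIV" for i
  proof -
    have s1: "(\<lambda>z. a z i * u (z + unitv i)) summable_on UNIV"
      by (rule summable_on_comparison_test[of "\<lambda>z. u (z + unitv i)"])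
         (use a u0 u in \<open>auto simp: summable_shift in_Omega_def intro: mult_left_le_one_le\<close>)
    have s2: "(\<lambda>z. a z i * u z) summable_on UNIV"
      by (rule summable_on_comparison_test[of u])
         (use a u0 u in \<open>auto simp: in_Omega_def intro: mult_left_le_one_le\<close>)
    show ?thesis using summable_on_diff[OF s1 s2] by (simp add: grad_def algebra_simps)
  qed
  have "((\<lambda>z. u z * (1/T) + divg (\<lambda>w i. a w i * grad u w i) z) has_sum (infsum u UNIV * (1/T) + 0)) UNIV"
    by (intro has_sum_add has_sum_cmult_left divg_has_sum0 fs) (use u in simp)
  then show ?thesis by (simp add: Lop_def[abs_def])
qed


primrec mseq :: "real \<Rightarrow> (int^'n::finite \<Rightarrow> 'n \<Rightarrow> real) \<Rightarrow> int^'n \<Rightarrow> nat \<Rightarrow> int^'n \<Rightarrow> real" where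
  "mseq T a p 0 = (\<lambda>z. if z = p then 1 else 0)"
| "mseq T a p (Suc n) = Mop T a (mseq T a p n)"

lemma mseq_props:
  fixes a :: "int^'n::finite \<Rightarrow> 'n \<Rightarrow> real"
  assumes T: "T > 0" and a: "in_Omega a"
  shows "(\<forall>z. mseq T a p n z \<ge> 0) \<and>
    (mseq T a p n has_sum (1 - 1 / (T * kap T TYPE('n))) ^ n) UNIV"
proof (induction n)
  case 0
  have h: "((\<lambda>z. if z = p then 1 else 0) has_sum (1::real)) {p}"
    by (rule has_sum_finiteI) auto
  have "((\<lambda>z. if z = p then 1 else 0) has_sum (1::real)) UNIV"
    using h has_sum_cong_neutral[of UNIV "{p}" "\<lambda>z. if z = p then 1 else (0::real)" "\<lambda>z. if z = p then 1 else 0" 1]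
    by (simp add: has_sum_finite)
  then show ?case by simp
next
  case (Suc n)
  let ?u = "mseq T a p n"
  let ?q = "1 - 1 / (T * kap T TYPE('n))"
  have u0: "\<And>z. ?u z \<ge> 0" and hs: "(?u has_sum ?q ^ n) UNIV" using Suc by auto
  have us: "?u summable_on UNIV" using hs by (auto simp: summable_on_def)
  have isu: "infsum ?u UNIV = ?q ^ n" using hs by (simp add: infsumI)
  have L: "(Lop T a ?u has_sum (?q ^ n / T)) UNIV"
    using Lop_has_sum[OF a u0 us, of T] isu by simp
  have "((\<lambda>z. ?u z - Lop T a ?u z * (1 / kap T TYPE('n))) has_sum (?q ^ n - ?q ^ n / T * (1 / kap T TYPE('n)))) UNIV"
    by (intro has_sum_diff hs has_sum_cmult_left L)
  moreover have "?q ^ n - ?q ^ n / T * (1 / kap T TYPE('n)) = ?q ^ Suc n"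
    by (simp add: algebra_simps)
  ultimately have "(mseq T a p (Suc n) has_sum ?q ^ Suc n) UNIV"
    by (simp add: Mop_def[abs_def])
  moreover have "\<forall>z. mseq T a p (Suc n) z \<ge> 0"
    using Mop_nonneg[OF T a u0] by simp
  ultimately show ?case by simp
qed

lemma Mop_sums:
  assumes T: "T > 0" and f: "\<And>w. (\<lambda>n. f n w) sums s w"
  shows "(\<lambda>n. Mop T a (f n) z) sums Mop T a s z"
  unfolding Mop_expand[OF T]
  by (intro sums_divide sums_sum sums_add sums_mult f)

lemma green_exists:
  fixes a :: "int^'n::finite \<Rightarrow> 'n \<Rightarrow> real"
  assumes T: "T > 0" and a: "in_Omega a"
  shows "\<exists>g. ell2 g \<and> (\<forall>z. Lop T a g z = (if z = p then 1 else 0))"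
proof -
  define k where "k = kap T TYPE('n)"
  define q where "q = 1 - 1 / (T * k)"
  define m where "m = mseq T a p"
  have k: "k > 0" unfolding k_def by (rule kap_pos[OF T])
  have Tk: "T * k \<ge> 1" unfolding k_def kap_def using T by (simp add: algebra_simps)
  have q0: "0 \<le> q" and q1: "q < 1" unfolding q_def using Tk T k by (auto simp: field_simps)
  have m0: "m n z \<ge> 0" for n z using mseq_props[OF T a] unfolding m_def by blast
  have mh: "(m n has_sum q ^ n) UNIV" for n using mseq_props[OF T a] unfolding m_def q_def k_def by blast
  have mle: "m n z \<le> q ^ n" for n z
    using finite_sum_le_has_sum[OF mh[of n], of "{z}"] m0 by simp
  have gs: "summable (\<lambda>n. q ^ n)" using q0 q1 by simp
  have sm: "summable (\<lambda>n. m n z)" for z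
    by (rule summable_comparison_test[OF _ gs]) (use m0 mle in auto)
  define H where "H z = suminf (\<lambda>n. m n z)" for z
  have H0: "H z \<ge> 0" for z unfolding H_def by (rule suminf_nonneg[OF sm m0])
  define C where "C = 1 / (1 - q)"
  have HF: "sum H F \<le> C" if "finite F" for F
  proof -
    have "sum H F = suminf (\<lambda>n. \<Sum>z\<in>F. m n z)"
      unfolding H_def by (rule suminf_sum[symmetric]) (rule sm)
    also have "\<dots> \<le> suminf (\<lambda>n. q ^ n)"
    proof (rule suminf_le)
      fix n show "(\<Sum>z\<in>F. m n z) \<le> q ^ n"
        using finite_sum_le_has_sum[OF mh[of n] that] m0 by simp
    qed (use sm gs in \<open>auto intro: summable_sum\<close>)
    also have "\<dots> = C" unfolding C_def using q0 q1 by (simp add: suminf_geometric)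
    finally show ?thesis .
  qed
  have Hs: "H summable_on UNIV"
    by (rule nonneg_bdd_above_summable_on) (use H0 HF in \<open>auto intro!: bdd_aboveI[where M=C]\<close>)
  have HC: "H z \<le> C" for z using HF[of "{z}"] by simp
  have H2: "ell2 H" unfolding ell2_def
  proof (rule summable_on_comparison_test[OF summable_on_cmult_right[OF Hs, of C]])
    fix z show "(H z)\<^sup>2 \<le> C * H z" using HC[of z] H0[of z]
      by (simp add: power2_eq_square mult_right_mono)
  qed auto
  have eq: "H z - (if z = p then 1 else 0) = Mop T a H z" for z
  proof -
    have "(\<lambda>n. m n z) sums H z" unfolding H_def using sm by (simp add: summable_sums)
    then have "(\<lambda>n. m (Suc n) z) sums (H z - m 0 z)" by (subst sums_Suc_iff) simp
    moreover have "(\<lambda>n. m (Suc n) z) sums Mop T a H z"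
      unfolding m_def mseq.simps
      by (rule Mop_sums[OF T]) (use sm in \<open>simp add: H_def summable_sums m_def\<close>)
    ultimately have "H z - m 0 z = Mop T a H z" using sums_unique2 by blast
    then show ?thesis by (simp add: m_def)
  qed
  define g where "g z = (1 / k) * H z" for z
  have "Lop T a g z = (if z = p then 1 else 0)" for z
  proof -
    have "Lop T a g z = (1 / k) * Lop T a H z" unfolding g_def by (rule Lop_scale)
    also have "\<dots> = (1 / k) * (k * (H z - Mop T a H z))" using k unfolding k_def by (simp add: Mop_def)
    also have "\<dots> = (if z = p then 1 else 0)" using k eq[of z] by simp
    finally show ?thesis .
  qed
  moreover have "ell2 g" unfolding g_def by (rule ell2_scale[OF H2])
  ultimately show ?thesis by blast
qed


lemma energy_bounds:
  fixes a :: "int^'n::finite \<Rightarrow> 'n \<Rightarrow> real"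
  assumes T: "T > 0" and a: "in_Omega a" and u: "ell2 u"
    and hs: "((\<lambda>z. u z * Lop T a u z) has_sum D) UNIV"
  shows "a x i * (grad u x i)\<^sup>2 \<le> D"
    and "(z, j) \<noteq> (x, i) \<Longrightarrow> a x i * (grad u x i)\<^sup>2 + a z j * (grad u z j)\<^sup>2 \<le> D"
proof -
  define B where "B j = infsum (\<lambda>z. a z j * (grad u z j)\<^sup>2) UNIV" for j
  have DE: "D = infsum (\<lambda>z. (u z)\<^sup>2) UNIV / T + (\<Sum>j\<in>UNIV. B j)"
    using has_sum_unique[OF hs energy[OF a u, of T]] unfolding B_def .
  have A0: "infsum (\<lambda>z. (u z)\<^sup>2) UNIV / T \<ge> 0" using T by (intro divide_nonneg_pos infsum_nonneg) auto
  have anz: "a z j \<ge> 0" "a z j \<le> 1" for z j using a by (auto simp: in_Omega_def)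
  have tn: "a z j * (grad u z j)\<^sup>2 \<ge> 0" for z j using anz by simp
  have bs: "(\<lambda>z. a z j * (grad u z j)\<^sup>2) summable_on UNIV" for j
  proof (rule summable_on_comparison_test[OF ell2_grad[OF u, of j, unfolded ell2_def]])
    fix z show "a z j * (grad u z j)\<^sup>2 \<le> (grad u z j)\<^sup>2"
      using anz[of z j] by (simp add: mult_left_le_one_le)
  qed (use tn in auto)
  have Bfin: "(\<Sum>z\<in>F. a z j * (grad u z j)\<^sup>2) \<le> B j" if "finite F" for F j
    unfolding B_def by (rule finite_sum_le_infsum[OF bs that]) (use tn in auto)
  have B0: "B j \<ge> 0" for j using Bfin[of "{}" j] by simp
  have Bmem: "B j \<le> (\<Sum>j\<in>UNIV. B j)" for j by (rule member_le_sum) (use B0 in auto)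
  have "a x i * (grad u x i)\<^sup>2 \<le> B i" using Bfin[of "{x}" i] by simp
  then show "a x i * (grad u x i)\<^sup>2 \<le> D" using Bmem[of i] A0 DE by linarith
  assume ne: "(z, j) \<noteq> (x, i)"
  show "a x i * (grad u x i)\<^sup>2 + a z j * (grad u z j)\<^sup>2 \<le> D"
  proof (cases "j = i")
    case True
    then have "z \<noteq> x" using ne by auto
    then have "a x i * (grad u x i)\<^sup>2 + a z j * (grad u z j)\<^sup>2 \<le> B i"
      using Bfin[of "{x, z}" i] True by simp
    then show ?thesis using Bmem[of i] A0 DE by linarith
  next
    case False
    have "B i + B j = (\<Sum>k\<in>{i, j}. B k)" using False by simp
    also have "\<dots> \<le> (\<Sum>k\<in>UNIV. B k)" by (rule sum_mono2) (use B0 in auto)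
    finally have "B i + B j \<le> (\<Sum>k\<in>UNIV. B k)" .
    moreover have "a x i * (grad u x i)\<^sup>2 \<le> B i" using Bfin[of "{x}" i] by simp
    moreover have "a z j * (grad u z j)\<^sup>2 \<le> B j" using Bfin[of "{z}" j] by simp
    ultimately show ?thesis using A0 DE by linarith
  qed
qed

lemma bond_cost_ge1: assumes b: "in_Omega b" shows "bond_cost b z j \<ge> 1"
proof (cases "b z j = 0")
  case True then show ?thesis by (simp add: bond_cost_def)
next
  case False
  then have "0 < b z j" "b z j \<le> 1" using b by (auto simp: in_Omega_def order_le_less)
  then have "1 \<le> 1 / b z j" by simp
  then have "ereal 1 \<le> ereal (1 / b z j)" by simp
  then show ?thesis using False by (simp add: bond_cost_def one_ereal_def)
qed

lemma step_cost_ge1: "in_Omega b \<Longrightarrow> step_cost b p q \<ge> 1"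
  unfolding step_cost_def using bond_cost_ge1 by auto

lemma step_bond:
  assumes nn: "nn p q" and fin: "step_cost b p q \<noteq> \<infinity>"
  shows "\<exists>z j. b z j \<noteq> 0 \<and> step_cost b p q = ereal (1 / b z j) \<and> \<bar>f q - f p\<bar> = \<bar>grad f z j\<bar>"
proof (cases "\<exists>i. q = p + unitv i")
  case True
  define j where "j = (SOME i. q = p + unitv i)"
  have qj: "q = p + unitv j" unfolding j_def using True by (rule someI_ex)
  have sc: "step_cost b p q = bond_cost b p j" using True unfolding step_cost_def j_def by simp
  with fin have "b p j \<noteq> 0" unfolding bond_cost_def by auto
  then show ?thesis using sc qj by (intro exI[of _ p] exI[of _ j]) (auto simp: bond_cost_def grad_def)
next
  case False
  then have ex: "\<exists>i. p = q + unitv i" using nn unfolding nn_def by auto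
  define j where "j = (SOME i. p = q + unitv i)"
  have pj: "p = q + unitv j" unfolding j_def using ex by (rule someI_ex)
  have sc: "step_cost b p q = bond_cost b q j" using False unfolding step_cost_def j_def by simp
  with fin have "b q j \<noteq> 0" unfolding bond_cost_def by auto
  then show ?thesis using sc pj by (intro exI[of _ q] exI[of _ j]) (auto simp: bond_cost_def grad_def)
qed

lemma path_cost_single: "path_cost b [p] = 0"
  by (simp add: path_cost_def)

lemma path_cost_cons: "path_cost b (p # q # rs) = step_cost b p q + path_cost b (q # rs)"
  unfolding path_cost_def by (simp del: sum.lessThan_Suc add: sum.lessThan_Suc_shift)

lemma is_path_cons: "is_path (p # q # rs) \<Longrightarrow> nn p q \<and> is_path (q # rs)"
  unfolding is_path_def
proof (intro conjI allI impI)
  assume h: "p # q # rs \<noteq> [] \<and> (\<forall>k. Suc k < length (p # q # rs) \<longrightarrow> nn ((p # q # rs) ! k) ((p # q # rs) ! Suc k))"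
  show "nn p q" using h[THEN conjunct2, rule_format, of 0] by simp
  fix k assume "Suc k < length (q # rs)"
  then show "nn ((q # rs) ! k) ((q # rs) ! Suc k)" using h[THEN conjunct2, rule_format, of "Suc k"] by simp
qed simp

lemma path_bound:
  assumes st: "\<And>p q. nn p q \<Longrightarrow> step_cost b p q \<noteq> \<infinity> \<Longrightarrow> \<bar>f q - f p\<bar> \<le> c * real_of_ereal (step_cost b p q)"
    and b: "in_Omega b"
  shows "is_path ps \<Longrightarrow> path_cost b ps \<noteq> \<infinity> \<Longrightarrow>
     \<bar>f (last ps) - f (hd ps)\<bar> \<le> c * real_of_ereal (path_cost b ps) \<and> path_cost b ps \<ge> 0 \<and>
     (length ps \<ge> 2 \<longrightarrow> real_of_ereal (path_cost b ps) \<ge> 1)"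
proof (induction ps)
  case Nil then show ?case by (simp add: is_path_def)
next
  case (Cons p rs)
  show ?case
  proof (cases rs)
    case Nil then show ?thesis using Cons by (simp add: path_cost_single)
  next
    case (Cons q rs')
    have pa: "nn p q" "is_path (q # rs')" using is_path_cons Cons.prems(1) \<open>rs = q # rs'\<close> by auto
    have pc: "path_cost b (p # rs) = step_cost b p q + path_cost b (q # rs')"
      using \<open>rs = q # rs'\<close> path_cost_cons by simp
    have s1: "step_cost b p q \<ge> 1" by (rule step_cost_ge1[OF b])
    have IHpre: "path_cost b (q # rs') \<ge> 0 \<or> path_cost b (q # rs') = \<infinity>"
      using Cons.IH pa \<open>rs = q # rs'\<close> by auto
    have fin1: "step_cost b p q \<noteq> \<infinity>" and fin2: "path_cost b (q # rs') \<noteq> \<infinity>"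
      using Cons.prems(2) pc s1 IHpre by auto
    have IH: "\<bar>f (last (q # rs')) - f q\<bar> \<le> c * real_of_ereal (path_cost b (q # rs'))"
      "path_cost b (q # rs') \<ge> 0"
      using Cons.IH pa fin2 \<open>rs = q # rs'\<close> by auto
    obtain s where s: "step_cost b p q = ereal s" "s \<ge> 1" using s1 fin1
      by (cases "step_cost b p q") auto
    obtain r where r: "path_cost b (q # rs') = ereal r" "r \<ge> 0" using IH(2) fin2
      by (cases "path_cost b (q # rs')") auto
    have sb: "\<bar>f q - f p\<bar> \<le> c * s" using st[OF pa(1) fin1] s by simp
    have "\<bar>f (last (p # rs)) - f (hd (p # rs))\<bar> \<le> \<bar>f (last (q # rs')) - f q\<bar> + \<bar>f q - f p\<bar>"
      using \<open>rs = q # rs'\<close> by simp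
    also have "\<dots> \<le> c * r + c * s" using IH(1) sb r by simp
    finally show ?thesis using pc s r by (simp add: algebra_simps)
  qed
qed


lemma key_alg:
  fixes \<alpha> D E R :: real
  assumes a0: "0 \<le> \<alpha>" and a1: "\<alpha> \<le> 1" and E: "E = D - \<alpha> * D\<^sup>2" and E0: "E \<ge> 0"
    and DR: "\<bar>D\<bar> \<le> sqrt E * R" and R1: "R \<ge> 1"
  shows "1 + \<alpha> / (1 - \<alpha> * D) \<le> 3 * R\<^sup>2"
proof (cases "\<alpha> = 0")
  case True
  have "1 \<le> R\<^sup>2" using R1 by (simp add: one_le_power)
  then show ?thesis using True by simp
next
  case False
  then have ap: "\<alpha> > 0" using a0 by simp
  define s where "s = 1 - \<alpha> * D"
  have Es: "E = D * s" unfolding E s_def by (simp add: power2_eq_square algebra_simps)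
  have D2: "D\<^sup>2 \<le> E * R\<^sup>2"
  proof -
    have "\<bar>D\<bar>\<^sup>2 \<le> (sqrt E * R)\<^sup>2" using DR by (intro power_mono) auto
    then show ?thesis using E0 by (simp add: power_mult_distrib)
  qed
  have sp: "s > 0"
  proof (rule ccontr)
    assume "\<not> s > 0"
    then have sn: "s \<le> 0" by simp
    then have "\<alpha> * D \<ge> 1" unfolding s_def by simp
    then have "0 < \<alpha> * D" by linarith
    then have Dp: "D > 0" using ap by (simp add: zero_less_mult_iff)
    then have "s \<ge> 0" using E0 Es by (simp add: zero_le_mult_iff)
    then have "s = 0" using sn by simp
    then have "D\<^sup>2 \<le> 0" using D2 Es by simp
    then show False using Dp by simp
  qed
  have D0: "D \<ge> 0" using E0 Es sp by (simp add: zero_le_mult_iff)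
  have DsR: "D \<le> s * R\<^sup>2"
  proof (cases "D = 0")
    case True then show ?thesis using sp by simp
  next
    case False
    then have "D > 0" using D0 by simp
    have "D * D \<le> D * (s * R\<^sup>2)" using D2 Es by (simp add: power2_eq_square algebra_simps)
    then show ?thesis using \<open>D > 0\<close> by simp
  qed
  have "1 \<le> s * (\<alpha> * R\<^sup>2 + 1)"
  proof -
    have "1 = \<alpha> * D + s" unfolding s_def by simp
    also have "\<dots> \<le> \<alpha> * (s * R\<^sup>2) + s" using DsR ap by (simp add: mult_left_mono)
    finally show ?thesis by (simp add: algebra_simps)
  qed
  then have "1 / s \<le> \<alpha> * R\<^sup>2 + 1" using sp by (simp add: field_simps)
  then have "\<alpha> * (1 / s) \<le> \<alpha> * (\<alpha> * R\<^sup>2 + 1)" using ap by (intro mult_left_mono) auto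
  moreover have "\<alpha> * (\<alpha> * R\<^sup>2 + 1) \<le> R\<^sup>2 + 1"
  proof -
    have "\<alpha> * \<alpha> \<le> 1" using a0 a1 by (simp add: mult_le_one)
    then have "\<alpha> * \<alpha> * R\<^sup>2 \<le> R\<^sup>2" by (simp add: mult_left_le_one_le)
    then show ?thesis using a1 by (simp add: algebra_simps)
  qed
  moreover have "1 \<le> R\<^sup>2" using R1 by (simp add: one_le_power)
  ultimately have "\<alpha> / s \<le> R\<^sup>2 + 1" by simp
  then show ?thesis unfolding s_def using \<open>1 \<le> R\<^sup>2\<close> by simp
qed


theorem lemma9:
  shows "\<exists>K::real. K > 0 \<and>
    (\<forall>(T::real) (a :: int^'n::finite \<Rightarrow> 'n \<Rightarrow> real) x i. T > 0 \<longrightarrow> in_Omega a \<longrightarrow>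
       ereal (1 + a x i / (1 - a x i * gradgrad_green T a x i)) \<le> ereal K * (omega0 a x i)\<^sup>2)"
proof (intro exI[of _ 3] conjI allI impI)
  show "(3::real) > 0" by simp
  fix T :: real and a :: "int^'n::finite \<Rightarrow> 'n \<Rightarrow> real" and x :: "int^'n" and i :: 'n
  assume T: "T > 0" and a: "in_Omega a"
  define y where "y = x + unitv i"
  obtain gx where gx: "ell2 gx" "\<And>z. Lop T a gx z = (if z = x then 1 else 0)"
    using green_exists[OF T a, of x] by blast
  obtain gy where gy: "ell2 gy" "\<And>z. Lop T a gy z = (if z = y then 1 else 0)"
    using green_exists[OF T a, of y] by blast
  have Gx: "green T a z x = gx z" for z by (rule green_eqI[OF T a gx])
  have Gy: "green T a z y = gy z" for z by (rule green_eqI[OF T a gy])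
  define w where "w z = gy z - gx z" for z
  have w: "ell2 w" unfolding w_def by (rule ell2_diff[OF gy(1) gx(1)])
  have Lw: "Lop T a w z = (if z = y then 1 else 0) - (if z = x then 1 else 0)" for z
    unfolding w_def[abs_def] by (simp add: Lop_diff gx gy)
  have "unitv i $ i = 1" by (simp add: unitv_def axis_def)
  then have xy: "x \<noteq> y" unfolding y_def by (metis add_cancel_left_right vector_add_component zero_index zero_neq_one)
  define D where "D = w y - w x"
  have gg: "gradgrad_green T a x i = D"
    unfolding gradgrad_green_def Let_def y_def[symmetric] Gx Gy D_def w_def by simp
  have hs: "((\<lambda>z. w z * Lop T a w z) has_sum D) UNIV"
  proof -
    have h: "((\<lambda>z. w z * Lop T a w z) has_sum D) {x, y}"
      by (rule has_sum_finiteI) (use xy in \<open>auto simp: Lw D_def\<close>)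
    show ?thesis
      using h has_sum_cong_neutral[of UNIV "{x, y}" "\<lambda>z. w z * Lop T a w z" "\<lambda>z. w z * Lop T a w z" D]
      by (auto simp: Lw)
  qed
  have gradx: "grad w x i = D" unfolding grad_def D_def y_def ..
  define E where "E = D - a x i * D\<^sup>2"
  have E0: "E \<ge> 0" using energy_bounds(1)[OF T a w hs, of x i] gradx unfolding E_def by simp
  have bond: "a z j * (grad w z j)\<^sup>2 \<le> E" if "(z, j) \<noteq> (x, i)" for z j
    using energy_bounds(2)[OF T a w hs that] gradx unfolding E_def by simp
  define a0 where "a0 = a(x := (a x)(i := 0))"
  have a0Om: "in_Omega a0" using a unfolding a0_def in_Omega_def by auto
  have st: "\<bar>w q - w p\<bar> \<le> sqrt E * real_of_ereal (step_cost a0 p q)"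
    if nn: "nn p q" and fin: "step_cost a0 p q \<noteq> \<infinity>" for p q
  proof -
    obtain z j where zj: "a0 z j \<noteq> 0" "step_cost a0 p q = ereal (1 / a0 z j)"
      "\<bar>w q - w p\<bar> = \<bar>grad w z j\<bar>"
      using step_bond[OF nn fin, of w] by blast
    have ne: "(z, j) \<noteq> (x, i)" using zj(1) unfolding a0_def by auto
    then have az: "a0 z j = a z j" unfolding a0_def by auto
    define \<beta> where "\<beta> = a z j"
    have b0: "0 < \<beta>" "\<beta> \<le> 1" using a zj(1) az unfolding \<beta>_def in_Omega_def by (auto simp: order_le_less)
    define g where "g = grad w z j"
    have bg: "\<beta> * g\<^sup>2 \<le> E" using bond[OF ne] unfolding \<beta>_def g_def .
    have "g\<^sup>2 \<le> E / \<beta>" using bg b0 by (simp add: field_simps)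
    also have "\<dots> \<le> E / \<beta>\<^sup>2"
    proof (rule divide_left_mono)
      show "\<beta>\<^sup>2 \<le> \<beta>" using b0 by (simp add: power2_eq_square mult_left_le_one_le)
    qed (use E0 b0 in auto)
    also have "\<dots> = (sqrt E * (1 / \<beta>))\<^sup>2" using E0 by (simp add: power_mult_distrib power_divide)
    finally have "\<bar>g\<bar>\<^sup>2 \<le> (sqrt E * (1 / \<beta>))\<^sup>2" by simp
    then have "\<bar>g\<bar> \<le> sqrt E * (1 / \<beta>)" by (rule power2_le_imp_le) (use b0 E0 in auto)
    then show ?thesis using zj az unfolding g_def \<beta>_def by simp
  qed
  define L where "L = 1 + a x i / (1 - a x i * D)"
  have pathL: "L \<le> 3 * (real_of_ereal (path_cost a0 ps))\<^sup>2 \<and> real_of_ereal (path_cost a0 ps) \<ge> 1"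
    if ps: "is_path ps" "hd ps = x" "last ps = y" "path_cost a0 ps \<noteq> \<infinity>" for ps
  proof -
    have pb: "\<bar>w (last ps) - w (hd ps)\<bar> \<le> sqrt E * real_of_ereal (path_cost a0 ps) \<and> path_cost a0 ps \<ge> 0 \<and>
     (length ps \<ge> 2 \<longrightarrow> real_of_ereal (path_cost a0 ps) \<ge> 1)"
      by (rule path_bound[OF st a0Om ps(1) ps(4)])
    have "length ps \<ge> 2"
    proof (rule ccontr)
      assume "\<not> length ps \<ge> 2"
      moreover have "ps \<noteq> []" using ps(1) by (simp add: is_path_def)
      ultimately obtain p where "ps = [p]" by (cases ps; cases "tl ps") auto
      then show False using ps xy by simp
    qed
    then have R1: "real_of_ereal (path_cost a0 ps) \<ge> 1" using pb by simp
    have "L \<le> 3 * (real_of_ereal (path_cost a0 ps))\<^sup>2"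
      unfolding L_def
    proof (rule key_alg[where E=E])
      show "0 \<le> a x i" "a x i \<le> 1" using a by (auto simp: in_Omega_def)
      show "\<bar>D\<bar> \<le> sqrt E * real_of_ereal (path_cost a0 ps)" using pb ps unfolding D_def by simp
    qed (use E_def E0 R1 in auto)
    then show ?thesis using R1 by simp
  qed
  define m where "m = max 1 (sqrt (L / 3))"
  have mle: "ereal m \<le> chem_dist a0 x y"
    unfolding chem_dist_def
  proof (rule Inf_greatest)
    fix c assume "c \<in> {path_cost a0 ps |ps. is_path ps \<and> hd ps = x \<and> last ps = y}"
    then obtain ps where ps: "is_path ps" "hd ps = x" "last ps = y" and c: "c = path_cost a0 ps" by blast
    have "ereal m \<le> path_cost a0 ps"
    proof (cases "path_cost a0 ps = \<infinity>")
      case True then show ?thesis by simp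
    next
      case False
      define R where "R = real_of_ereal (path_cost a0 ps)"
      have LR: "L \<le> 3 * R\<^sup>2" "R \<ge> 1" using pathL[OF ps False] unfolding R_def by auto
      have pc: "path_cost a0 ps = ereal R"
        using False LR(2) unfolding R_def by (cases "path_cost a0 ps") auto
      have "sqrt (L / 3) \<le> R" by (rule real_le_lsqrt) (use LR in auto)
      then have "m \<le> R" unfolding m_def using LR by simp
      then show ?thesis using pc by simp
    qed
    then show "ereal m \<le> c" using c by simp
  qed
  have om: "omega0 a x i = chem_dist a0 x y ^ (CARD('n) + 2)"
    by (simp add: omega0_def omega_def a0_def y_def)
  have m1: "m \<ge> 1" unfolding m_def by simp
  have Lm: "L \<le> 3 * m\<^sup>2"
  proof (cases "L \<ge> 0")
    case True
    have "sqrt (L / 3) \<le> m" unfolding m_def by simp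
    then have "(sqrt (L / 3))\<^sup>2 \<le> m\<^sup>2" by (intro power_mono) (use True in auto)
    then show ?thesis using True by simp
  next
    case False then show ?thesis by (smt (verit) zero_le_power2)
  qed
  have fin: "ereal L \<le> ereal 3 * (chem_dist a0 x y ^ (CARD('n) + 2))\<^sup>2"
  proof (cases "chem_dist a0 x y")
    case (real r)
    then have rm: "m \<le> r" using mle by simp
    then have r1: "r \<ge> 1" using m1 by simp
    have "m\<^sup>2 \<le> r\<^sup>2" using rm m1 by (intro power_mono) auto
    also have "r\<^sup>2 \<le> (r ^ (CARD('n) + 2))\<^sup>2"
    proof -
      have "r ^ 1 \<le> r ^ (CARD('n) + 2)" using r1 by (intro power_increasing) auto
      then show ?thesis using r1 by (intro power_mono) auto
    qed
    finally have "L \<le> 3 * (r ^ (CARD('n) + 2))\<^sup>2" using Lm by simp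
    then show "ereal L \<le> ereal 3 * (chem_dist a0 x y ^ (CARD('n) + 2))\<^sup>2" using real by simp
  next
    case PInf then show "ereal L \<le> ereal 3 * (chem_dist a0 x y ^ (CARD('n) + 2))\<^sup>2" by simp
  next
    case MInf then show "ereal L \<le> ereal 3 * (chem_dist a0 x y ^ (CARD('n) + 2))\<^sup>2" using mle by simp
  qed
  then show "ereal (1 + a x i / (1 - a x i * gradgrad_green T a x i)) \<le> ereal 3 * (omega0 a x i)\<^sup>2"
    unfolding gg om L_def .
qed

end
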